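(* Under the hypotheses of the following setting, suppose in addition that ${\bf f}_1$ and ${\bf f}_2$ are time-invariant. Setting: ${\bf f}_1,{\bf f}_2:\mathbb{R}^m\to\mathbb{R}^m$ continuously differentiable with uniformly bounded Jacobians whose symmetric parts are uniformly negative definite ($\le -\beta I$ for some $\beta>0$); ${\bf G}$ a constant $m\times p$ matrix; $k_{12},k_{21}>0$; constant delays $T_{12},T_{21}\ge0$; and the system $$\dot{\bf x}_1={\bf f}_1({\bf x}_1)+\tfrac{1}{k_{21}}{\bf G}{\bf G}^T\big({\bf x}_2(t-T_{21})-{\bf x}_1(t)\big),\quad \dot{\bf x}_2={\bf f}_2({\bf x}_2)+\tfrac{1}{k_{12}}{\bf G}{\bf G}^T\big({\bf x}_1(t-T_{12})-{\bf x}_2(t)\big).$$ Then there is a unique equilibrium point $({\bf x}_1^*,{\bf x}_2^* )$, which is the same for all values of $T_{12},T_{21}$, and all solutions converge to it, independently of the initial conditions and of the delays. *)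

theory Defs
  imports "HOL-Analysis.Analysis"
begin

definition contracting_field :: "(real^'m \<Rightarrow> real^'m) \<Rightarrow> bool" where
  "contracting_field f \<longleftrightarrow>
     (\<exists>J :: real^'m \<Rightarrow> real^'m^'m.
        (\<forall>x. (f has_derivative (\<lambda>h. J x *v h)) (at x)) \<and>
        continuous_on UNIV J \<and>
        (\<exists>B. \<forall>x. norm (J x) \<le> B) \<and>
        (\<exists>\<beta>>0. \<forall>x h. h \<bullet> (J x *v h) \<le> - \<beta> * (h \<bullet> h)))"

definition coupled_equilibrium ::
  "(real^'m \<Rightarrow> real^'m) \<Rightarrow> (real^'m \<Rightarrow> real^'m) \<Rightarrow> real^'p^'m \<Rightarrow> real \<Rightarrow> real \<Rightarrow>
   real^'m \<Rightarrow> real^'m \<Rightarrow> bool" where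
  "coupled_equilibrium f1 f2 G k12 k21 a b \<longleftrightarrow>
     f1 a + (1 / k21) *\<^sub>R ((G ** transpose G) *v (b - a)) = 0 \<and>
     f2 b + (1 / k12) *\<^sub>R ((G ** transpose G) *v (a - b)) = 0"

text \<open>A solution of the delayed coupled system: x1, x2 are defined (continuous)
  on [-max T12 T21, oo), the values on [-max T12 T21, 0] being the arbitrary
  continuous initial history, and they satisfy the delay ODEs for t > 0.\<close>
definition coupled_solution ::
  "(real^'m \<Rightarrow> real^'m) \<Rightarrow> (real^'m \<Rightarrow> real^'m) \<Rightarrow> real^'p^'m \<Rightarrow> real \<Rightarrow> real \<Rightarrow>
   real \<Rightarrow> real \<Rightarrow> (real \<Rightarrow> real^'m) \<Rightarrow> (real \<Rightarrow> real^'m) \<Rightarrow> bool" where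
  "coupled_solution f1 f2 G k12 k21 T12 T21 x1 x2 \<longleftrightarrow>
     continuous_on {- max T12 T21..} x1 \<and> continuous_on {- max T12 T21..} x2 \<and>
     (\<forall>t>0.
        (x1 has_vector_derivative
           (f1 (x1 t) + (1 / k21) *\<^sub>R ((G ** transpose G) *v (x2 (t - T21) - x1 t)))) (at t) \<and>
        (x2 has_vector_derivative
           (f2 (x2 t) + (1 / k12) *\<^sub>R ((G ** transpose G) *v (x1 (t - T12) - x2 t)))) (at t))"

end

theory Submission
  imports Defs
begin


lemma matrix_opnorm_bound:
  fixes A :: "real^'n^'m"
  assumes "norm A \<le> B"
  shows "onorm ((*v) A) \<le> real CARD('m) * real CARD('n) * B"
proof (rule onorm_le_matrix_component)
  fix i j
  have "\<bar>A $ i $ j\<bar> \<le> norm (A $ i)" by (rule component_le_norm_cart)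
  also have "\<dots> \<le> norm A" by (rule Finite_Cartesian_Product.norm_nth_le)
  finally show "\<bar>A $ i $ j\<bar> \<le> B" using assms by linarith
qed

lemma cf_lipschitz:
  assumes "contracting_field f"
  shows "\<exists>L>0. \<forall>x y. norm (f x - f y) \<le> L * norm (x - y)"
proof -
  from assms obtain J B where d: "\<And>x. (f has_derivative (\<lambda>h. J x *v h)) (at x)"
    and B: "\<And>x. norm (J x) \<le> B"
    unfolding contracting_field_def by blast
  let ?L = "real CARD('a) * real CARD('a) * B"
  have "norm (f x - f y) \<le> ?L * norm (x - y)" for x y
    apply (rule differentiable_bound[where S=UNIV and f'="\<lambda>x. (*v) (J x)"])
    using d B matrix_opnorm_bound by auto
  then have "\<forall>x y. norm (f x - f y) \<le> (\<bar>?L\<bar> + 1) * norm (x - y)"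
    by (smt (verit) mult_right_mono norm_ge_zero)
  then show ?thesis by (intro exI[of _ "\<bar>?L\<bar> + 1"]) auto
qed

lemma cf_monotone:
  assumes "contracting_field f"
  shows "\<exists>\<beta>>0. \<forall>x y. (f x - f y) \<bullet> (x - y) \<le> - \<beta> * ((x - y) \<bullet> (x - y))"
proof -
  from assms obtain J \<beta> where d: "\<And>x. (f has_derivative (\<lambda>h. J x *v h)) (at x)"
    and \<beta>: "\<beta> > 0" "\<And>x h. h \<bullet> (J x *v h) \<le> - \<beta> * (h \<bullet> h)"
    unfolding contracting_field_def by blast
  have "(f x - f y) \<bullet> (x - y) \<le> - \<beta> * ((x - y) \<bullet> (x - y))" for x y
  proof -
    define d where "d = x - y"
    define h where "h t = f (y + t *\<^sub>R d) \<bullet> d + \<beta> * t * (d \<bullet> d)" for t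
    have D: "(h has_real_derivative ((J (y + t *\<^sub>R d) *v d) \<bullet> d + \<beta> * (d \<bullet> d))) (at t)" for t
    proof -
      have "((\<lambda>t. y + t *\<^sub>R d) has_derivative (\<lambda>s. s *\<^sub>R d)) (at t)"
        by (auto intro!: derivative_eq_intros)
      from has_derivative_compose[OF this d]
      have "((\<lambda>t. f (y + t *\<^sub>R d)) has_derivative (\<lambda>s. J (y + t *\<^sub>R d) *v (s *\<^sub>R d))) (at t)" .
      then have "((\<lambda>t. f (y + t *\<^sub>R d) \<bullet> d + \<beta> * t * (d \<bullet> d)) has_derivative
           (\<lambda>s. (J (y + t *\<^sub>R d) *v (s *\<^sub>R d)) \<bullet> d + \<beta> * s * (d \<bullet> d))) (at t)"
        by (auto intro!: derivative_eq_intros)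
      moreover have "(\<lambda>s. (J (y + t *\<^sub>R d) *v (s *\<^sub>R d)) \<bullet> d + \<beta> * s * (d \<bullet> d))
         = (*) ((J (y + t *\<^sub>R d) *v d) \<bullet> d + \<beta> * (d \<bullet> d))"
        by (auto simp: fun_eq_iff matrix_vector_mult_scaleR algebra_simps)
      ultimately show ?thesis unfolding has_field_derivative_def h_def by simp
    qed
    have "h 1 \<le> h 0"
      apply (rule DERIV_nonpos_imp_nonincreasing[of 0 1 h])
      apply simp
      subgoal for t
        using D[of t] \<beta>(2)[of d "y + t *\<^sub>R d"] by (intro exI[of _ "(J (y + t *\<^sub>R d) *v d) \<bullet> d + \<beta> * (d \<bullet> d)"]) (auto simp: inner_commute)
      done
    then have "f x \<bullet> d + \<beta> * (d \<bullet> d) \<le> f y \<bullet> d" by (simp add: h_def d_def)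
    then show ?thesis by (simp add: d_def inner_diff_left algebra_simps)
  qed
  then show ?thesis using \<beta>(1) by blast
qed



lemma GG_inner:
  fixes G :: "real^'p^'m"
  shows "x \<bullet> ((G ** transpose G) *v w) = (transpose G *v x) \<bullet> (transpose G *v w)"
  by (simp add: matrix_vector_mul_assoc[symmetric] dot_lmul_matrix[symmetric])

lemma GG_sum_nonpos:
  fixes G :: "real^'p^'m"
  shows "d1 \<bullet> ((G ** transpose G) *v (d2 - d1)) + d2 \<bullet> ((G ** transpose G) *v (d1 - d2)) \<le> 0"
proof -
  let ?u = "transpose G *v d1" and ?v = "transpose G *v d2"
  have "d1 \<bullet> ((G ** transpose G) *v (d2 - d1)) + d2 \<bullet> ((G ** transpose G) *v (d1 - d2))
      = - ((?u - ?v) \<bullet> (?u - ?v))"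
    by (simp add: GG_inner matrix_vector_mult_diff_distrib inner_diff_left inner_diff_right inner_commute)
  also have "\<dots> \<le> 0" by simp
  finally show ?thesis .
qed

lemma equilibrium_exists_unique:
  fixes f1 f2 :: "real^'m \<Rightarrow> real^'m"
    and G :: "real^'p^'m"
  assumes L1: "\<And>x y. norm (f1 x - f1 y) \<le> L1 * norm (x - y)"
    and L2: "\<And>x y. norm (f2 x - f2 y) \<le> L2 * norm (x - y)"
    and b1: "\<beta>1 > 0" "\<And>x y. (f1 x - f1 y) \<bullet> (x - y) \<le> - \<beta>1 * ((x - y) \<bullet> (x - y))"
    and b2: "\<beta>2 > 0" "\<And>x y. (f2 x - f2 y) \<bullet> (x - y) \<le> - \<beta>2 * ((x - y) \<bullet> (x - y))"
    and k: "k12 > 0" "k21 > 0"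
  shows "\<exists>!(a, b). coupled_equilibrium f1 f2 G k12 k21 a b"
proof -
  define M where "M = G ** transpose G"
  obtain K where K: "K > 0" "\<And>w. norm (M *v w) \<le> norm w * K"
    using bounded_linear.pos_bounded[OF matrix_vector_mul_bounded_linear[of M]] by blast
  define F where "F z = (k21 *\<^sub>R f1 (fst z) + M *v (snd z - fst z),
                          k12 *\<^sub>R f2 (snd z) + M *v (fst z - snd z))" for z :: "(real^'m) \<times> (real^'m)"
  define c where "c = min (k21 * \<beta>1) (k12 * \<beta>2)"
  have c: "c > 0" using b1 b2 k by (simp add: c_def)
  have mono: "(F z - F z') \<bullet> (z - z') \<le> - c * ((z - z') \<bullet> (z - z'))" for z z'
  proof -
    obtain a b a' b' where z: "z = (a, b)" and z': "z' = (a', b')" by (cases z, cases z')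
    define d1 where "d1 = a - a'"
    define d2 where "d2 = b - b'"
    have e1: "(f1 a - f1 a') \<bullet> d1 \<le> - \<beta>1 * (d1 \<bullet> d1)" using b1(2) by (simp add: d1_def)
    have e2: "(f2 b - f2 b') \<bullet> d2 \<le> - \<beta>2 * (d2 \<bullet> d2)" using b2(2) by (simp add: d2_def)
    have g: "d1 \<bullet> (M *v (d2 - d1)) + d2 \<bullet> (M *v (d1 - d2)) \<le> 0"
      unfolding M_def by (rule GG_sum_nonpos)
    have "(F z - F z') \<bullet> (z - z') = k21 * ((f1 a - f1 a') \<bullet> d1) + k12 * ((f2 b - f2 b') \<bullet> d2)
        + (d1 \<bullet> (M *v (d2 - d1)) + d2 \<bullet> (M *v (d1 - d2)))"
      by (simp add: z z' F_def d1_def d2_def matrix_vector_mult_diff_distrib inner_diff_left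
          inner_diff_right inner_add_left inner_add_right inner_commute algebra_simps)
    also have "\<dots> \<le> k21 * (- \<beta>1 * (d1 \<bullet> d1)) + k12 * (- \<beta>2 * (d2 \<bullet> d2))"
      using e1 e2 g k by (smt (verit) mult_left_mono)
    also have "\<dots> \<le> - c * (d1 \<bullet> d1) - c * (d2 \<bullet> d2)"
    proof -
      have "c * (d1 \<bullet> d1) \<le> (k21 * \<beta>1) * (d1 \<bullet> d1)"
        by (rule mult_right_mono) (auto simp: c_def)
      moreover have "c * (d2 \<bullet> d2) \<le> (k12 * \<beta>2) * (d2 \<bullet> d2)"
        by (rule mult_right_mono) (auto simp: c_def)
      ultimately show ?thesis by (simp add: algebra_simps)
    qed
    also have "\<dots> = - c * ((z - z') \<bullet> (z - z'))"
      by (simp add: z z' d1_def d2_def algebra_simps)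
    finally show ?thesis .
  qed
  define L where "L = k21 * \<bar>L1\<bar> + k12 * \<bar>L2\<bar> + 4 * K + c"
  have "k21 * \<bar>L1\<bar> \<ge> 0" "k12 * \<bar>L2\<bar> \<ge> 0" using k by simp_all
  then have Lc: "c \<le> L" "L > 0" using K k c unfolding L_def by linarith+
  have lip: "norm (F z - F z') \<le> L * norm (z - z')" for z z'
  proof -
    obtain a b a' b' where z: "z = (a, b)" and z': "z' = (a', b')" by (cases z, cases z')
    define d1 where "d1 = a - a'"
    define d2 where "d2 = b - b'"
    have n1: "norm d1 \<le> norm (z - z')" "norm d2 \<le> norm (z - z')"
      using norm_fst_le[of d1 d2] norm_snd_le[of d2 d1] by (auto simp: z z' d1_def d2_def)
    have "F z - F z' = (k21 *\<^sub>R (f1 a - f1 a') + M *v (d2 - d1), k12 *\<^sub>R (f2 b - f2 b') + M *v (d1 - d2))"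
      by (simp add: z z' F_def d1_def d2_def matrix_vector_mult_diff_distrib algebra_simps)
    then have "norm (F z - F z') \<le> norm (k21 *\<^sub>R (f1 a - f1 a') + M *v (d2 - d1)) + norm (k12 *\<^sub>R (f2 b - f2 b') + M *v (d1 - d2))"
      by (simp add: norm_Pair_le)
    also have "\<dots> \<le> (k21 * (\<bar>L1\<bar> * norm d1) + norm (d2 - d1) * K) + (k12 * (\<bar>L2\<bar> * norm d2) + norm (d1 - d2) * K)"
    proof -
      have "norm (f1 a - f1 a') \<le> \<bar>L1\<bar> * norm d1" using L1[of a a'] unfolding d1_def
        by (smt (verit) mult_right_mono norm_ge_zero)
      moreover have "norm (f2 b - f2 b') \<le> \<bar>L2\<bar> * norm d2" using L2[of b b'] unfolding d2_def
        by (smt (verit) mult_right_mono norm_ge_zero)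
      ultimately show ?thesis using k K(2)[of "d2 - d1"] K(2)[of "d1 - d2"]
        by (smt (verit) mult_left_mono norm_triangle_ineq norm_scaleR)
    qed
    also have "\<dots> \<le> (k21 * (\<bar>L1\<bar> * norm (z - z')) + 2 * norm (z - z') * K) + (k12 * (\<bar>L2\<bar> * norm (z - z')) + 2 * norm (z - z') * K)"
    proof -
      have "norm (d2 - d1) \<le> 2 * norm (z - z')" "norm (d1 - d2) \<le> 2 * norm (z - z')"
        using n1 norm_triangle_ineq4[of d2 d1] norm_triangle_ineq4[of d1 d2] by auto
      then show ?thesis using n1 k K
        by (smt (verit) mult_left_mono mult_right_mono abs_ge_zero)
    qed
    also have "\<dots> \<le> L * norm (z - z')"
      unfolding L_def using c by (simp add: algebra_simps)
    finally show ?thesis .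
  qed
  define \<epsilon> where "\<epsilon> = c / L\<^sup>2"
  define q where "q = 1 - c\<^sup>2 / L\<^sup>2"
  have q: "0 \<le> q" "q < 1"
    using Lc c by (auto simp: q_def power_mono divide_le_eq_1)
  define \<Phi> where "\<Phi> z = z + \<epsilon> *\<^sub>R F z" for z
  have contr: "dist (\<Phi> z) (\<Phi> z') \<le> sqrt q * dist z z'" for z z'
  proof -
    define d where "d = z - z'"
    define D where "D = F z - F z'"
    have eqn: "\<Phi> z - \<Phi> z' = d + \<epsilon> *\<^sub>R D" by (simp add: \<Phi>_def d_def D_def algebra_simps)
    have "(norm (\<Phi> z - \<Phi> z'))\<^sup>2 = (d + \<epsilon> *\<^sub>R D) \<bullet> (d + \<epsilon> *\<^sub>R D)"
      by (simp only: eqn power2_norm_eq_inner)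
    also have "\<dots> = d \<bullet> d + 2 * \<epsilon> * (D \<bullet> d) + \<epsilon>\<^sup>2 * (D \<bullet> D)"
      by (simp add: inner_add_left inner_add_right power2_eq_square algebra_simps inner_commute[of d D])
    also have "\<dots> \<le> d \<bullet> d + 2 * \<epsilon> * (- c * (d \<bullet> d)) + \<epsilon>\<^sup>2 * (L\<^sup>2 * (d \<bullet> d))"
    proof -
      have e: "\<epsilon> \<ge> 0" using c Lc by (simp add: \<epsilon>_def)
      have "D \<bullet> d \<le> - c * (d \<bullet> d)" using mono[of z z'] by (simp add: D_def d_def)
      moreover have "D \<bullet> D \<le> L\<^sup>2 * (d \<bullet> d)"
      proof -
        have "norm D \<le> L * norm d" using lip by (simp add: D_def d_def)
        then have "(norm D)\<^sup>2 \<le> (L * norm d)\<^sup>2" by (rule power_mono) simp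
        then show ?thesis by (simp add: power2_norm_eq_inner[symmetric] power_mult_distrib)
      qed
      ultimately show ?thesis using e
        by (smt (verit) mult_left_mono zero_le_power2 mult_nonneg_nonneg)
    qed
    also have "\<dots> = q * (d \<bullet> d)"
      using Lc by (simp add: q_def \<epsilon>_def power2_eq_square field_simps)
    finally have "(dist (\<Phi> z) (\<Phi> z'))\<^sup>2 \<le> (sqrt q * dist z z')\<^sup>2"
      using q by (simp add: dist_norm d_def power_mult_distrib power2_norm_eq_inner[symmetric])
    moreover have "0 \<le> sqrt q * dist z z'" using q by simp
    ultimately show ?thesis by (rule power2_le_imp_le)
  qed
  obtain z0 where z0: "\<Phi> z0 = z0"
    using banach_fix_type[of "sqrt q" \<Phi>] q contr by (auto simp: real_sqrt_lt_1_iff)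
  have eps: "\<epsilon> > 0" using c Lc by (simp add: \<epsilon>_def)
  have Fz0: "F z0 = 0" using z0 eps by (simp add: \<Phi>_def)
  have eqF: "coupled_equilibrium f1 f2 G k12 k21 a b \<longleftrightarrow> F (a, b) = 0" for a b
  proof -
    have "f1 a + (1 / k21) *\<^sub>R (M *v (b - a)) = 0 \<longleftrightarrow> k21 *\<^sub>R f1 a + M *v (b - a) = 0"
    proof -
      have "k21 *\<^sub>R (f1 a + (1 / k21) *\<^sub>R (M *v (b - a))) = k21 *\<^sub>R f1 a + M *v (b - a)"
        using k by (simp add: scaleR_add_right)
      then show ?thesis using k by (smt (verit, ccfv_threshold) scaleR_eq_0_iff)
    qed
    moreover have "f2 b + (1 / k12) *\<^sub>R (M *v (a - b)) = 0 \<longleftrightarrow> k12 *\<^sub>R f2 b + M *v (a - b) = 0"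
    proof -
      have "k12 *\<^sub>R (f2 b + (1 / k12) *\<^sub>R (M *v (a - b))) = k12 *\<^sub>R f2 b + M *v (a - b)"
        using k by (simp add: scaleR_add_right)
      then show ?thesis using k by (smt (verit, ccfv_threshold) scaleR_eq_0_iff)
    qed
    ultimately show ?thesis by (simp add: coupled_equilibrium_def F_def M_def zero_prod_def)
  qed
  have uniq: "z = z0" if "F z = 0" for z
  proof -
    have "0 \<le> - c * ((z - z0) \<bullet> (z - z0))" using mono[of z z0] that Fz0 by simp
    then have "(z - z0) \<bullet> (z - z0) \<le> 0" using c by (simp add: mult_le_0_iff)
    then have "(z - z0) \<bullet> (z - z0) = 0" using inner_ge_zero[of "z - z0"] by linarith
    then show ?thesis by simp
  qed
  show ?thesis
  proof (rule ex1I[of _ z0])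
    show "case z0 of (a, b) \<Rightarrow> coupled_equilibrium f1 f2 G k12 k21 a b"
      using Fz0 eqF by (cases z0) simp
  next
    fix z assume "case z of (a, b) \<Rightarrow> coupled_equilibrium f1 f2 G k12 k21 a b"
    then show "z = z0" using uniq eqF by (cases z) simp
  qed
qed



lemma hvd_sq:
  fixes x :: "real \<Rightarrow> 'a::real_inner"
  assumes "(x has_vector_derivative v) (at t)"
  shows "((\<lambda>t. (x t - a) \<bullet> (x t - a)) has_real_derivative 2 * ((x t - a) \<bullet> v)) (at t)"
proof -
  have "((\<lambda>t. x t - a) has_derivative (\<lambda>h. h *\<^sub>R v)) (at t)"
    using assms by (auto simp: has_vector_derivative_def intro!: derivative_eq_intros)
  from has_derivative_inner[OF this this]
  have "((\<lambda>t. (x t - a) \<bullet> (x t - a)) has_derivative (\<lambda>h. (x t - a) \<bullet> (h *\<^sub>R v) + (h *\<^sub>R v) \<bullet> (x t - a))) (at t)" .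
  moreover have "(\<lambda>h. (x t - a) \<bullet> (h *\<^sub>R v) + (h *\<^sub>R v) \<bullet> (x t - a)) = (*) (2 * ((x t - a) \<bullet> v))"
    by (auto simp: fun_eq_iff inner_commute)
  ultimately show ?thesis by (simp add: has_field_derivative_def)
qed

lemma integral_deriv:
  fixes g :: "real \<Rightarrow> real"
  assumes "continuous_on {c..} g" "t > c"
  shows "((\<lambda>t. integral {c..t} g) has_real_derivative g t) (at t)"
proof -
  have "continuous_on {c..t+1} g" using continuous_on_subset assms(1) by fastforce
  from integral_has_real_derivative[OF this, of t]
  have "((\<lambda>t. integral {c..t} g) has_real_derivative g t) (at t within {c..t+1})" using assms by auto
  moreover have "at t within {c..t+1} = at t" by (rule at_within_interior) (use assms in auto)
  ultimately show ?thesis by simp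
qed

lemma vec_mvt:
  fixes x :: "real \<Rightarrow> 'a::real_normed_vector"
  assumes "t \<le> s" "\<And>r. r \<in> {t..s} \<Longrightarrow> (x has_vector_derivative x' r) (at r)"
    "\<And>r. r \<in> {t..s} \<Longrightarrow> norm (x' r) \<le> B"
  shows "norm (x s - x t) \<le> B * (s - t)"
proof -
  have "norm (x s - x t) \<le> B * norm (s - t)"
  proof (rule differentiable_bound[where S="{t..s}" and f'="\<lambda>r h. h *\<^sub>R x' r"])
    fix r assume r: "r \<in> {t..s}"
    show "(x has_derivative (\<lambda>h. h *\<^sub>R x' r)) (at r within {t..s})"
      using has_vector_derivative_at_within[OF assms(2)[OF r]] by (simp add: has_vector_derivative_def)
    show "onorm (\<lambda>h. h *\<^sub>R x' r) \<le> B"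
      by (rule onorm_le) (use assms(3)[OF r] in \<open>auto simp: mult.commute[of B] intro: mult_left_mono\<close>)
  qed (use assms in auto)
  then show ?thesis using assms(1) by simp
qed

lemma cross_ineq:
  fixes u v u' v' :: "'a::real_inner"
  shows "2 * (u \<bullet> (v' - u)) + 2 * (v \<bullet> (u' - v)) + (v \<bullet> v - v' \<bullet> v') + (u \<bullet> u - u' \<bullet> u') \<le> 0"
proof -
  have "2 * (u \<bullet> (v' - u)) + 2 * (v \<bullet> (u' - v)) + (v \<bullet> v - v' \<bullet> v') + (u \<bullet> u - u' \<bullet> u')
      = - (((u - v') \<bullet> (u - v')) + ((v - u') \<bullet> (v - u')))"
    by (simp add: inner_diff_left inner_diff_right inner_commute algebra_simps)
  also have "\<dots> \<le> 0"
  proof -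
    have "0 \<le> (u - v') \<bullet> (u - v')" "0 \<le> (v - u') \<bullet> (v - u')" by simp_all
    then show ?thesis by linarith
  qed
  finally show ?thesis .
qed

lemma norm_le_of_inner:
  fixes x :: "'a::real_inner"
  assumes "x \<bullet> x \<le> A"
  shows "norm x \<le> max 1 A"
proof (cases "norm x \<le> 1")
  case True then show ?thesis by simp
next
  case False
  then have "norm x * 1 \<le> norm x * norm x" by (intro mult_left_mono) auto
  also have "\<dots> = x \<bullet> x" by (simp add: power2_norm_eq_inner[symmetric] power2_eq_square)
  finally show ?thesis using assms by simp
qed



lemma convergence:
  fixes f1 f2 :: "real^'m \<Rightarrow> real^'m" and G :: "real^'p^'m"
  assumes L1: "\<And>x y. norm (f1 x - f1 y) \<le> L1 * norm (x - y)"
    and L2: "\<And>x y. norm (f2 x - f2 y) \<le> L2 * norm (x - y)"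
    and b1: "\<beta>1 > 0" "\<And>x y. (f1 x - f1 y) \<bullet> (x - y) \<le> - \<beta>1 * ((x - y) \<bullet> (x - y))"
    and b2: "\<beta>2 > 0" "\<And>x y. (f2 x - f2 y) \<bullet> (x - y) \<le> - \<beta>2 * ((x - y) \<bullet> (x - y))"
    and k: "k12 > 0" "k21 > 0"
    and T: "T12 \<ge> 0" "T21 \<ge> 0"
    and eq: "coupled_equilibrium f1 f2 G k12 k21 a b"
    and sol: "coupled_solution f1 f2 G k12 k21 T12 T21 x1 x2"
  shows "((\<lambda>t. (x1 t, x2 t)) \<longlongrightarrow> (a, b)) at_top"
proof -
  define m where "m = max T12 T21"
  have m: "m \<ge> 0" "T12 \<le> m" "T21 \<le> m" using T by (auto simp: m_def)
  define M where "M = G ** transpose G"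
  define Gt where "Gt = transpose G"
  define x1' where "x1' t = f1 (x1 t) + (1 / k21) *\<^sub>R (M *v (x2 (t - T21) - x1 t))" for t
  define x2' where "x2' t = f2 (x2 t) + (1 / k12) *\<^sub>R (M *v (x1 (t - T12) - x2 t))" for t
  from sol have c1: "continuous_on {-m..} x1" and c2: "continuous_on {-m..} x2"
    and d1: "\<And>t. t > 0 \<Longrightarrow> (x1 has_vector_derivative x1' t) (at t)"
    and d2: "\<And>t. t > 0 \<Longrightarrow> (x2 has_vector_derivative x2' t) (at t)"
    unfolding coupled_solution_def m_def M_def x1'_def x2'_def by auto
  from eq have eq1: "f1 a = - ((1 / k21) *\<^sub>R (M *v (b - a)))"
    and eq2: "f2 b = - ((1 / k12) *\<^sub>R (M *v (a - b)))"
    unfolding coupled_equilibrium_def M_def by (simp_all add: eq_neg_iff_add_eq_0)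
  define g1 where "g1 s = (Gt *v (x1 s - a)) \<bullet> (Gt *v (x1 s - a))" for s
  define g2 where "g2 s = (Gt *v (x2 s - b)) \<bullet> (Gt *v (x2 s - b))" for s
  have cg1: "continuous_on {-m..} g1"
  proof -
    have "continuous_on {-m..} (\<lambda>s. Gt *v (x1 s - a))"
      by (rule bounded_linear.continuous_on[OF matrix_vector_mul_bounded_linear]) (intro continuous_intros c1)
    then show ?thesis unfolding g1_def by (intro continuous_intros)
  qed
  have cg2: "continuous_on {-m..} g2"
  proof -
    have "continuous_on {-m..} (\<lambda>s. Gt *v (x2 s - b))"
      by (rule bounded_linear.continuous_on[OF matrix_vector_mul_bounded_linear]) (intro continuous_intros c2)
    then show ?thesis unfolding g2_def by (intro continuous_intros)
  qed
  define P1 where "P1 t = integral {-m..t} g1" for t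
  define P2 where "P2 t = integral {-m..t} g2" for t
  have dP1: "(P1 has_real_derivative g1 t) (at t)" if "t > -m" for t
    unfolding P1_def using integral_deriv[OF cg1 that] .
  have dP2: "(P2 has_real_derivative g2 t) (at t)" if "t > -m" for t
    unfolding P2_def using integral_deriv[OF cg2 that] .
  define V where "V t = k21 * ((x1 t - a) \<bullet> (x1 t - a)) + k12 * ((x2 t - b) \<bullet> (x2 t - b))
     + (P2 t - P2 (t - T21)) + (P1 t - P1 (t - T12))" for t
  define V' where "V' t = k21 * (2 * ((x1 t - a) \<bullet> x1' t)) + k12 * (2 * ((x2 t - b) \<bullet> x2' t))
     + (g2 t - g2 (t - T21)) + (g1 t - g1 (t - T12))" for t
  have dV: "(V has_real_derivative V' t) (at t)" if t: "t > 0" for t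
  proof -
    have s1: "((\<lambda>t. P1 (t - T12)) has_real_derivative g1 (t - T12)) (at t)"
      using dP1[of "t + - T12"] m t DERIV_shift[of P1 "g1 (t - T12)" t "- T12"] by simp
    have s2: "((\<lambda>t. P2 (t - T21)) has_real_derivative g2 (t - T21)) (at t)"
      using dP2[of "t + - T21"] m t DERIV_shift[of P2 "g2 (t - T21)" t "- T21"] by simp
    have "t > -m" using t m by simp
    show ?thesis unfolding V_def V'_def
      by (intro DERIV_add DERIV_cmult DERIV_diff hvd_sq d1 d2 t s1 s2 dP1 dP2 \<open>t > -m\<close>)
  qed
  define c where "c = min (k21 * \<beta>1) (k12 * \<beta>2)"
  have c: "c > 0" using b1 b2 k by (simp add: c_def)
  have V'_le: "V' t \<le> - c * ((x1 t - a) \<bullet> (x1 t - a) + (x2 t - b) \<bullet> (x2 t - b))" if t: "t > 0" for t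
  proof -
    define e1 where "e1 = x1 t - a"
    define e2 where "e2 = x2 t - b"
    define e1d where "e1d = x1 (t - T12) - a"
    define e2d where "e2d = x2 (t - T21) - b"
    have h1: "k21 * (e1 \<bullet> x1' t) = k21 * (e1 \<bullet> (f1 (x1 t) - f1 a)) + e1 \<bullet> (M *v (e2d - e1))"
    proof -
      have "e2d - e1 = (x2 (t - T21) - x1 t) - (b - a)" by (simp add: e2d_def e1_def)
      then have "M *v (e2d - e1) = M *v (x2 (t - T21) - x1 t) - M *v (b - a)"
        by (simp add: matrix_vector_mult_diff_distrib)
      then show ?thesis using k unfolding x1'_def eq1
        by (simp add: inner_add_right inner_diff_right inner_minus_right right_diff_distrib distrib_left)
    qed
    have h2: "k12 * (e2 \<bullet> x2' t) = k12 * (e2 \<bullet> (f2 (x2 t) - f2 b)) + e2 \<bullet> (M *v (e1d - e2))"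
    proof -
      have "e1d - e2 = (x1 (t - T12) - x2 t) - (a - b)" by (simp add: e1d_def e2_def)
      then have "M *v (e1d - e2) = M *v (x1 (t - T12) - x2 t) - M *v (a - b)"
        by (simp add: matrix_vector_mult_diff_distrib)
      then show ?thesis using k unfolding x2'_def eq2
        by (simp add: inner_add_right inner_diff_right inner_minus_right right_diff_distrib distrib_left)
    qed
    have m1: "e1 \<bullet> (f1 (x1 t) - f1 a) \<le> - \<beta>1 * (e1 \<bullet> e1)"
      using b1(2)[of "x1 t" a] by (simp add: e1_def inner_commute)
    have m2: "e2 \<bullet> (f2 (x2 t) - f2 b) \<le> - \<beta>2 * (e2 \<bullet> e2)"
      using b2(2)[of "x2 t" b] by (simp add: e2_def inner_commute)
    have cr: "2 * (e1 \<bullet> (M *v (e2d - e1))) + 2 * (e2 \<bullet> (M *v (e1d - e2)))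
        + (g2 t - g2 (t - T21)) + (g1 t - g1 (t - T12)) \<le> 0"
    proof -
      have "e1 \<bullet> (M *v (e2d - e1)) = (Gt *v e1) \<bullet> (Gt *v e2d - Gt *v e1)"
        unfolding M_def Gt_def GG_inner by (simp only: matrix_vector_mult_diff_distrib)
      moreover have "e2 \<bullet> (M *v (e1d - e2)) = (Gt *v e2) \<bullet> (Gt *v e1d - Gt *v e2)"
        unfolding M_def Gt_def GG_inner by (simp only: matrix_vector_mult_diff_distrib)
      moreover have "g1 t = (Gt *v e1) \<bullet> (Gt *v e1)" "g1 (t - T12) = (Gt *v e1d) \<bullet> (Gt *v e1d)"
        "g2 t = (Gt *v e2) \<bullet> (Gt *v e2)" "g2 (t - T21) = (Gt *v e2d) \<bullet> (Gt *v e2d)"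
        by (simp_all add: g1_def g2_def e1_def e2_def e1d_def e2d_def)
      ultimately show ?thesis using cross_ineq[of "Gt *v e1" "Gt *v e2d" "Gt *v e2" "Gt *v e1d"] by simp
    qed
    have "V' t = 2 * (k21 * (e1 \<bullet> (f1 (x1 t) - f1 a))) + 2 * (k12 * (e2 \<bullet> (f2 (x2 t) - f2 b)))
        + (2 * (e1 \<bullet> (M *v (e2d - e1))) + 2 * (e2 \<bullet> (M *v (e1d - e2)))
        + (g2 t - g2 (t - T21)) + (g1 t - g1 (t - T12)))"
      unfolding V'_def using h1 h2 by (simp add: e1_def e2_def algebra_simps)
    also have "\<dots> \<le> 2 * (k21 * (- \<beta>1 * (e1 \<bullet> e1))) + 2 * (k12 * (- \<beta>2 * (e2 \<bullet> e2)))"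
      using cr m1 m2 k by (smt (verit) mult_left_mono)
    also have "\<dots> \<le> - c * (e1 \<bullet> e1 + e2 \<bullet> e2)"
    proof -
      have "c * (e1 \<bullet> e1) \<le> (k21 * \<beta>1) * (e1 \<bullet> e1)"
        by (rule mult_right_mono) (auto simp: c_def)
      moreover have "c * (e2 \<bullet> e2) \<le> (k12 * \<beta>2) * (e2 \<bullet> e2)"
        by (rule mult_right_mono) (auto simp: c_def)
      moreover have "0 \<le> (k21 * \<beta>1) * (e1 \<bullet> e1)" "0 \<le> (k12 * \<beta>2) * (e2 \<bullet> e2)"
        using k b1 b2 by simp_all
      ultimately show ?thesis by (simp add: algebra_simps)
    qed
    finally show ?thesis by (simp add: e1_def e2_def)
  qed

  have V'nonpos: "V' t \<le> 0" if "t > 0" for t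
  proof -
    have "0 \<le> c * ((x1 t - a) \<bullet> (x1 t - a) + (x2 t - b) \<bullet> (x2 t - b))"
      using c by (intro mult_nonneg_nonneg add_nonneg_nonneg) auto
    then show ?thesis using V'_le[OF that] by linarith
  qed
  have Vmono: "V t \<le> V s" if "0 < s" "s \<le> t" for s t
  proof (rule DERIV_nonpos_imp_nonincreasing[of s t V])
    fix x assume "s \<le> x" "x \<le> t"
    then have "x > 0" using that by linarith
    then show "\<exists>y. (V has_real_derivative y) (at x) \<and> y \<le> 0" using dV V'nonpos by blast
  qed (use that in auto)
  have stor1: "P1 t - P1 (t - T12) \<ge> 0" if "t \<ge> 0" for t
  proof -
    have "continuous_on {-m..t} g1" using cg1 by (rule continuous_on_subset) auto
    then have int: "g1 integrable_on {-m..t}" by (rule integrable_continuous_real)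
    have "integral {-m..t - T12} g1 + integral {t - T12..t} g1 = integral {-m..t} g1"
      by (rule Henstock_Kurzweil_Integration.integral_combine) (use m T that int in auto)
    moreover have "integral {t - T12..t} g1 \<ge> 0"
    proof (rule Henstock_Kurzweil_Integration.integral_nonneg)
      show "g1 integrable_on {t - T12..t}" by (rule integrable_on_subinterval[OF int]) (use m T that in auto)
    qed (simp add: g1_def)
    ultimately show ?thesis unfolding P1_def by linarith
  qed
  have stor2: "P2 t - P2 (t - T21) \<ge> 0" if "t \<ge> 0" for t
  proof -
    have "continuous_on {-m..t} g2" using cg2 by (rule continuous_on_subset) auto
    then have int: "g2 integrable_on {-m..t}" by (rule integrable_continuous_real)
    have "integral {-m..t - T21} g2 + integral {t - T21..t} g2 = integral {-m..t} g2"
      by (rule Henstock_Kurzweil_Integration.integral_combine) (use m T that int in auto)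
    moreover have "integral {t - T21..t} g2 \<ge> 0"
    proof (rule Henstock_Kurzweil_Integration.integral_nonneg)
      show "g2 integrable_on {t - T21..t}" by (rule integrable_on_subinterval[OF int]) (use m T that in auto)
    qed (simp add: g2_def)
    ultimately show ?thesis unfolding P2_def by linarith
  qed
  have Vlow1: "k21 * ((x1 t - a) \<bullet> (x1 t - a)) \<le> V t" and Vlow2: "k12 * ((x2 t - b) \<bullet> (x2 t - b)) \<le> V t"
    and Vnn: "0 \<le> V t" if "t \<ge> 0" for t
  proof -
    have "0 \<le> k21 * ((x1 t - a) \<bullet> (x1 t - a))" "0 \<le> k12 * ((x2 t - b) \<bullet> (x2 t - b))"
      using k by simp_all
    then show "k21 * ((x1 t - a) \<bullet> (x1 t - a)) \<le> V t" "k12 * ((x2 t - b) \<bullet> (x2 t - b)) \<le> V t" "0 \<le> V t"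
      using stor1[OF that] stor2[OF that] unfolding V_def by linarith+
  qed
  obtain E where E: "E > 0" "\<And>s. s \<ge> -m \<Longrightarrow> norm (x1 s - a) \<le> E" "\<And>s. s \<ge> -m \<Longrightarrow> norm (x2 s - b) \<le> E"
  proof -
    have c1': "continuous_on {-m..1} x1" using c1 by (rule continuous_on_subset) auto
    have c2': "continuous_on {-m..1} x2" using c2 by (rule continuous_on_subset) auto
    have "bounded ((\<lambda>s. x1 s - a) ` {-m..1})"
      by (intro compact_imp_bounded compact_continuous_image continuous_intros c1') auto
    then obtain B1 where B1: "\<forall>s\<in>{-m..1}. norm (x1 s - a) \<le> B1" unfolding bounded_iff by auto
    have "bounded ((\<lambda>s. x2 s - b) ` {-m..1})"
      by (intro compact_imp_bounded compact_continuous_image continuous_intros c2') auto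
    then obtain B2 where B2: "\<forall>s\<in>{-m..1}. norm (x2 s - b) \<le> B2" unfolding bounded_iff by auto
    define E where "E = max (max B1 B2) (max 1 (max (V 1 / k21) (V 1 / k12)))"
    have "E \<ge> 1" by (simp add: E_def)
    have bx1: "norm (x1 s - a) \<le> E" if "s \<ge> -m" for s
    proof (cases "s \<le> 1")
      case True then have "norm (x1 s - a) \<le> B1" using B1 that by auto
      then show ?thesis by (simp add: E_def)
    next
      case False
      have "k21 * ((x1 s - a) \<bullet> (x1 s - a)) \<le> V 1" using Vlow1[of s] Vmono[of 1 s] False by simp
      then have "(x1 s - a) \<bullet> (x1 s - a) \<le> V 1 / k21" using k by (simp add: field_simps)
      then have "norm (x1 s - a) \<le> max 1 (V 1 / k21)" by (rule norm_le_of_inner)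
      then show ?thesis by (simp add: E_def)
    qed
    have bx2: "norm (x2 s - b) \<le> E" if "s \<ge> -m" for s
    proof (cases "s \<le> 1")
      case True then have "norm (x2 s - b) \<le> B2" using B2 that by auto
      then show ?thesis by (simp add: E_def)
    next
      case False
      have "k12 * ((x2 s - b) \<bullet> (x2 s - b)) \<le> V 1" using Vlow2[of s] Vmono[of 1 s] False by simp
      then have "(x2 s - b) \<bullet> (x2 s - b) \<le> V 1 / k12" using k by (simp add: field_simps)
      then have "norm (x2 s - b) \<le> max 1 (V 1 / k12)" by (rule norm_le_of_inner)
      then show ?thesis by (simp add: E_def)
    qed
    show ?thesis by (rule that[of E]) (use \<open>E \<ge> 1\<close> bx1 bx2 in auto)
  qed
  obtain K where K: "K > 0" "\<And>w. norm (M *v w) \<le> norm w * K"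
    using bounded_linear.pos_bounded[OF matrix_vector_mul_bounded_linear[of M]] by blast
  define Md where "Md = \<bar>L1\<bar> * E + \<bar>L2\<bar> * E + (1 / k21 + 1 / k12) * (2 * E * K) + 1"
  have Md: "Md > 0"
  proof -
    have "0 \<le> \<bar>L1\<bar> * E" "0 \<le> \<bar>L2\<bar> * E" "0 \<le> (1 / k21 + 1 / k12) * (2 * E * K)"
      using E K k by simp_all
    then show ?thesis unfolding Md_def by linarith
  qed
  have dxb: "norm (x1' s) \<le> Md \<and> norm (x2' s) \<le> Md" if s: "s > 0" for s
  proof -
    have sm: "s \<ge> -m" "s - T21 \<ge> -m" "s - T12 \<ge> -m" using s m by auto
    have "norm (x1' s) \<le> \<bar>L1\<bar> * E + (1 / k21) * (2 * E * K)"
    proof -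
      define w where "w = (x2 (s - T21) - b) - (x1 s - a)"
      have "w = (x2 (s - T21) - x1 s) - (b - a)" by (simp add: w_def algebra_simps)
      then have Mw: "M *v w = M *v (x2 (s - T21) - x1 s) - M *v (b - a)"
        by (simp only: matrix_vector_mult_diff_distrib)
      have "x1' s = (f1 (x1 s) - f1 a) + (1 / k21) *\<^sub>R (M *v w)"
        unfolding x1'_def Mw eq1 by (simp add: scaleR_diff_right)
      then have "norm (x1' s) \<le> norm (f1 (x1 s) - f1 a) + (1 / k21) * norm (M *v w)"
        using k by (metis norm_triangle_ineq norm_scaleR abs_of_pos zero_less_divide_1_iff)
      moreover have "norm (f1 (x1 s) - f1 a) \<le> \<bar>L1\<bar> * E"
      proof -
        have "norm (f1 (x1 s) - f1 a) \<le> L1 * norm (x1 s - a)" by (rule L1)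
        also have "\<dots> \<le> \<bar>L1\<bar> * norm (x1 s - a)" by (intro mult_right_mono) auto
        also have "\<dots> \<le> \<bar>L1\<bar> * E" using E(2)[OF sm(1)] by (intro mult_left_mono) auto
        finally show ?thesis .
      qed
      moreover have "norm (M *v w) \<le> 2 * E * K"
      proof -
        have "norm w \<le> norm (x2 (s - T21) - b) + norm (x1 s - a)" unfolding w_def by (rule norm_triangle_ineq4)
        also have "\<dots> \<le> 2 * E" using E(2)[OF sm(1)] E(3)[OF sm(2)] by simp
        finally have "norm w * K \<le> 2 * E * K" using K by (intro mult_right_mono) auto
        then show ?thesis using K(2)[of w] by linarith
      qed
      ultimately show ?thesis using k by (smt (verit) mult_left_mono zero_le_divide_1_iff)
    qed
    moreover have "norm (x2' s) \<le> \<bar>L2\<bar> * E + (1 / k12) * (2 * E * K)"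
    proof -
      define w where "w = (x1 (s - T12) - a) - (x2 s - b)"
      have "w = (x1 (s - T12) - x2 s) - (a - b)" by (simp add: w_def algebra_simps)
      then have Mw: "M *v w = M *v (x1 (s - T12) - x2 s) - M *v (a - b)"
        by (simp only: matrix_vector_mult_diff_distrib)
      have "x2' s = (f2 (x2 s) - f2 b) + (1 / k12) *\<^sub>R (M *v w)"
        unfolding x2'_def Mw eq2 by (simp add: scaleR_diff_right)
      then have "norm (x2' s) \<le> norm (f2 (x2 s) - f2 b) + (1 / k12) * norm (M *v w)"
        using k by (metis norm_triangle_ineq norm_scaleR abs_of_pos zero_less_divide_1_iff)
      moreover have "norm (f2 (x2 s) - f2 b) \<le> \<bar>L2\<bar> * E"
      proof -
        have "norm (f2 (x2 s) - f2 b) \<le> L2 * norm (x2 s - b)" by (rule L2)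
        also have "\<dots> \<le> \<bar>L2\<bar> * norm (x2 s - b)" by (intro mult_right_mono) auto
        also have "\<dots> \<le> \<bar>L2\<bar> * E" using E(3)[OF sm(1)] by (intro mult_left_mono) auto
        finally show ?thesis .
      qed
      moreover have "norm (M *v w) \<le> 2 * E * K"
      proof -
        have "norm w \<le> norm (x1 (s - T12) - a) + norm (x2 s - b)" unfolding w_def by (rule norm_triangle_ineq4)
        also have "\<dots> \<le> 2 * E" using E(2)[OF sm(3)] E(3)[OF sm(1)] by simp
        finally have "norm w * K \<le> 2 * E * K" using K by (intro mult_right_mono) auto
        then show ?thesis using K(2)[of w] by linarith
      qed
      ultimately show ?thesis using k by (smt (verit) mult_left_mono zero_le_divide_1_iff)
    qed
    moreover have "0 \<le> \<bar>L1\<bar> * E" "0 \<le> \<bar>L2\<bar> * E" "0 \<le> (1 / k21) * (2 * E * K)" "0 \<le> (1 / k12) * (2 * E * K)"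
      using E K k by simp_all
    ultimately show ?thesis unfolding Md_def by (simp add: distrib_right)
  qed
  have decr: "V (t + \<epsilon> / Md) \<le> V t - c * \<epsilon>\<^sup>2 * (\<epsilon> / Md)"
    if t: "t \<ge> 1" and ep: "\<epsilon> > 0" and big: "2 * \<epsilon> \<le> norm (x1 t - a) \<or> 2 * \<epsilon> \<le> norm (x2 t - b)" for t \<epsilon>
  proof -
    define \<delta> where "\<delta> = \<epsilon> / Md"
    have \<delta>: "\<delta> > 0" "Md * \<delta> = \<epsilon>" using ep Md by (simp_all add: \<delta>_def)
    have Sr: "\<epsilon>\<^sup>2 \<le> (x1 r - a) \<bullet> (x1 r - a) + (x2 r - b) \<bullet> (x2 r - b)" if r: "r \<in> {t..t + \<delta>}" for r
    proof -
      have nd1: "norm (x1 r - x1 t) \<le> Md * (r - t)"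
      proof (rule vec_mvt[where x'=x1'])
        show "t \<le> r" using r by simp
      next
        fix r' assume "r' \<in> {t..r}"
        then have "r' > 0" using t by simp
        then show "(x1 has_vector_derivative x1' r') (at r')" by (rule d1)
      next
        fix r' assume "r' \<in> {t..r}"
        then have "r' > 0" using t by simp
        then show "norm (x1' r') \<le> Md" using dxb by blast
      qed
      have nd2: "norm (x2 r - x2 t) \<le> Md * (r - t)"
      proof (rule vec_mvt[where x'=x2'])
        show "t \<le> r" using r by simp
      next
        fix r' assume "r' \<in> {t..r}"
        then have "r' > 0" using t by simp
        then show "(x2 has_vector_derivative x2' r') (at r')" by (rule d2)
      next
        fix r' assume "r' \<in> {t..r}"
        then have "r' > 0" using t by simp
        then show "norm (x2' r') \<le> Md" using dxb by blast
      qed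
      have "Md * (r - t) \<le> Md * \<delta>" using r Md by (intro mult_left_mono) auto
      then have rr: "Md * (r - t) \<le> \<epsilon>" using \<delta> by simp
      have n1: "norm (x1 t - a) \<le> norm (x1 r - a) + norm (x1 r - x1 t)"
        using norm_triangle_ineq4[of "x1 r - a" "x1 r - x1 t"] by (simp add: algebra_simps)
      have n2: "norm (x2 t - b) \<le> norm (x2 r - b) + norm (x2 r - x2 t)"
        using norm_triangle_ineq4[of "x2 r - b" "x2 r - x2 t"] by (simp add: algebra_simps)
      have "\<epsilon> \<le> norm (x1 r - a) \<or> \<epsilon> \<le> norm (x2 r - b)"
        using big n1 n2 nd1 nd2 rr by linarith
      then show ?thesis
      proof
        assume "\<epsilon> \<le> norm (x1 r - a)"
        then have "\<epsilon>\<^sup>2 \<le> (norm (x1 r - a))\<^sup>2" using ep by (intro power_mono) auto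
        then show ?thesis by (simp add: power2_norm_eq_inner add_increasing2)
      next
        assume "\<epsilon> \<le> norm (x2 r - b)"
        then have "\<epsilon>\<^sup>2 \<le> (norm (x2 r - b))\<^sup>2" using ep by (intro power_mono) auto
        then show ?thesis by (simp add: power2_norm_eq_inner add_increasing)
      qed
    qed
    define h where "h r = V r + c * \<epsilon>\<^sup>2 * r" for r
    have "h (t + \<delta>) \<le> h t"
    proof (rule DERIV_nonpos_imp_nonincreasing[of t "t + \<delta>" h])
      show "t \<le> t + \<delta>" using \<delta> by simp
      fix r assume r: "t \<le> r" "r \<le> t + \<delta>"
      have r0: "r > 0" using r t by simp
      have "(h has_real_derivative V' r + c * \<epsilon>\<^sup>2) (at r)"
        unfolding h_def using dV[OF r0] by (auto intro!: derivative_eq_intros)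
      moreover have "V' r + c * \<epsilon>\<^sup>2 \<le> 0"
      proof -
        have "c * \<epsilon>\<^sup>2 \<le> c * ((x1 r - a) \<bullet> (x1 r - a) + (x2 r - b) \<bullet> (x2 r - b))"
          using Sr[of r] r c by (intro mult_left_mono) auto
        then show ?thesis using V'_le[OF r0] by linarith
      qed
      ultimately show "\<exists>y. (h has_real_derivative y) (at r) \<and> y \<le> 0" by blast
    qed
    then show ?thesis by (simp add: h_def \<delta>_def algebra_simps)
  qed
  have ev: "eventually (\<lambda>t. norm (x1 t - a) < 2 * \<epsilon> \<and> norm (x2 t - b) < 2 * \<epsilon>) at_top" if ep: "\<epsilon> > 0" for \<epsilon>
  proof -
    define \<kappa> where "\<kappa> = c * \<epsilon>\<^sup>2 * (\<epsilon> / Md)"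
    have \<kappa>: "\<kappa> > 0" unfolding \<kappa>_def using c ep Md by (intro mult_pos_pos divide_pos_pos) auto
    define Lo where "Lo = Inf (V ` {1..})"
    have bdd: "bdd_below (V ` {1..})"
    proof (rule bdd_belowI[of _ 0])
      fix y assume "y \<in> V ` {1..}"
      then obtain s where "s \<ge> 1" "y = V s" by auto
      then show "0 \<le> y" using Vnn[of s] by simp
    qed
    have "Lo < Lo + \<kappa>" using \<kappa> by simp
    then have "\<exists>x\<in>{1..}. V x < Lo + \<kappa>"
      unfolding Lo_def using cInf_less_iff[OF _ bdd, of "Lo + \<kappa>"] by (simp add: Lo_def)
    then obtain t0 where t0: "t0 \<ge> 1" "V t0 < Lo + \<kappa>" by auto
    have "norm (x1 t - a) < 2 * \<epsilon> \<and> norm (x2 t - b) < 2 * \<epsilon>" if "t \<ge> t0" for t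
    proof (rule ccontr)
      assume "\<not> ?thesis"
      then have big: "2 * \<epsilon> \<le> norm (x1 t - a) \<or> 2 * \<epsilon> \<le> norm (x2 t - b)" by auto
      have "V (t + \<epsilon> / Md) \<le> V t - \<kappa>" using decr[OF _ ep big] t0 that by (simp add: \<kappa>_def)
      moreover have "V t \<le> V t0" using Vmono[of t0 t] t0 that by simp
      moreover have "Lo \<le> V (t + \<epsilon> / Md)"
      proof -
        have "\<epsilon> / Md > 0" using ep Md by simp
        then have "t + \<epsilon> / Md \<in> {1..}" using t0 that by simp
        then show ?thesis unfolding Lo_def by (rule cInf_lower[OF imageI bdd])
      qed
      ultimately show False using t0 by linarith
    qed
    then show ?thesis unfolding eventually_at_top_linorder by blast
  qed
  have "(x1 \<longlongrightarrow> a) at_top"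
  proof (rule tendstoI)
    fix e :: real assume "e > 0"
    then have "eventually (\<lambda>t. norm (x1 t - a) < 2 * (e / 2) \<and> norm (x2 t - b) < 2 * (e / 2)) at_top"
      by (intro ev) simp
    then show "eventually (\<lambda>t. dist (x1 t) a < e) at_top"
      by (rule eventually_mono) (simp add: dist_norm)
  qed
  moreover have "(x2 \<longlongrightarrow> b) at_top"
  proof (rule tendstoI)
    fix e :: real assume "e > 0"
    then have "eventually (\<lambda>t. norm (x1 t - a) < 2 * (e / 2) \<and> norm (x2 t - b) < 2 * (e / 2)) at_top"
      by (intro ev) simp
    then show "eventually (\<lambda>t. dist (x2 t) b < e) at_top"
      by (rule eventually_mono) (simp add: dist_norm)
  qed
  ultimately show ?thesis by (rule tendsto_Pair)
qed

theorem mainTheorem2: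
  fixes f1 f2 :: "real^'m \<Rightarrow> real^'m"
    and G :: "real^'p^'m"
    and k12 k21 :: real
  assumes "contracting_field f1" and "contracting_field f2"
    and "k12 > 0" and "k21 > 0"
  shows "(\<exists>!(a, b). coupled_equilibrium f1 f2 G k12 k21 a b) \<and>
         (\<forall>a b. coupled_equilibrium f1 f2 G k12 k21 a b \<longrightarrow>
           (\<forall>T12 T21 x1 x2. T12 \<ge> 0 \<longrightarrow> T21 \<ge> 0 \<longrightarrow>
              coupled_solution f1 f2 G k12 k21 T12 T21 x1 x2 \<longrightarrow>
              ((\<lambda>t. (x1 t, x2 t)) \<longlongrightarrow> (a, b)) at_top))"
proof -
  obtain L1 where L1: "\<And>x y. norm (f1 x - f1 y) \<le> L1 * norm (x - y)"
    using cf_lipschitz[OF assms(1)] by blast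
  obtain L2 where L2: "\<And>x y. norm (f2 x - f2 y) \<le> L2 * norm (x - y)"
    using cf_lipschitz[OF assms(2)] by blast
  obtain \<beta>1 where b1: "\<beta>1 > 0" "\<And>x y. (f1 x - f1 y) \<bullet> (x - y) \<le> - \<beta>1 * ((x - y) \<bullet> (x - y))"
    using cf_monotone[OF assms(1)] by blast
  obtain \<beta>2 where b2: "\<beta>2 > 0" "\<And>x y. (f2 x - f2 y) \<bullet> (x - y) \<le> - \<beta>2 * ((x - y) \<bullet> (x - y))"
    using cf_monotone[OF assms(2)] by blast
  have "\<exists>!(a, b). coupled_equilibrium f1 f2 G k12 k21 a b"
    by (rule equilibrium_exists_unique[OF L1 L2 b1 b2 assms(3,4)])
  moreover have "\<forall>a b. coupled_equilibrium f1 f2 G k12 k21 a b \<longrightarrow>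
           (\<forall>T12 T21 x1 x2. T12 \<ge> 0 \<longrightarrow> T21 \<ge> 0 \<longrightarrow>
              coupled_solution f1 f2 G k12 k21 T12 T21 x1 x2 \<longrightarrow>
              ((\<lambda>t. (x1 t, x2 t)) \<longlongrightarrow> (a, b)) at_top)"
    using convergence[OF L1 L2 b1 b2 assms(3,4)] by blast
  ultimately show ?thesis by blast
qed

end
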